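(* Let $\mathcal S\subset\mathbb R^n$ be a finite positive spanning set of unit vectors and $P=\{x: x^\top d\le 1\ \forall d\in\mathcal S\}$. Consider the randomized algorithm which sets $v=\mathbf 0$ and, at each iteration, samples $c$ uniformly from the unit sphere $\{x\in\mathbb R^n:\|x\|=1\}$ (independently across iterations), computes a vertex solution $\bar v$ of the linear program $\max c^\top x$ subject to $x\in P$, and replaces $v$ by $\bar v$ if $\|\bar v\|>\|v\|$; after $k$ iterations it outputs $1/\|v\|$ and $v/\|v\|$. Then, with probability $1$, when run ad infinitum (i.e., as $k\to\infty$), the algorithm finds a minimizer: almost surely there is an iteration after which $v$ is a maximizer of $\|x\|^2$ over $P$, so that $v/\|v\|$ minimizes $\max_{d\in\mathcal S}d^\top u$ over unit vectors $u$ and $1/\|v\|$ equals the cosine measure of $\mathcal S$.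
   Context: A finite set $\{d_1,\dots,d_k\}\subset\mathbb R^n$ is positive spanning if $\{\sum_i\lambda_id_i:\lambda_i\ge0\}=\mathbb R^n$. The cosine measure of a finite set $\mathcal S\subset\mathbb R^n\setminus\{\mathbf 0\}$ is $\operatorname{cm}(\mathcal S)=\min_{\|u\|=1}\max_{d\in\mathcal S}\frac{d^\top u}{\|d\|}$, and its minimizers are the cosine vectors. For such $\mathcal S$ of unit vectors, maximizers $x^*$ of $\|x\|^2$ over $P$ exist and correspond to cosine vectors $x^*/\|x^*\|$ with $\operatorname{cm}(\mathcal S)=1/\|x^*\|$. *)

theory Defs
  imports "HOL-Analysis.Analysis" "HOL-Probability.Probability"
begin

definition positive_spanning :: "'a::euclidean_space set \<Rightarrow> bool" where
  "positive_spanning S \<longleftrightarrow>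
     (\<forall>x. \<exists>l. (\<forall>d\<in>S. l d \<ge> 0) \<and> x = (\<Sum>d\<in>S. l d *\<^sub>R d))"

definition polyP :: "'a::euclidean_space set \<Rightarrow> 'a set" where
  "polyP S = {x. \<forall>d\<in>S. inner x d \<le> 1}"

definition cm_val :: "'a::euclidean_space set \<Rightarrow> 'a \<Rightarrow> real" where
  "cm_val S u = Max ((\<lambda>d. inner d u / norm d) ` S)"

definition cos_measure :: "'a::euclidean_space set \<Rightarrow> real" where
  "cos_measure S = Inf {cm_val S u | u. norm u = 1}"

definition cosine_vector :: "'a::euclidean_space set \<Rightarrow> 'a \<Rightarrow> bool" where
  "cosine_vector S u \<longleftrightarrow> norm u = 1 \<and> (\<forall>w. norm w = 1 \<longrightarrow> cm_val S u \<le> cm_val S w)"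

definition is_vertex_solution :: "'a::euclidean_space set \<Rightarrow> 'a \<Rightarrow> 'a \<Rightarrow> bool" where
  "is_vertex_solution S c v \<longleftrightarrow>
     v \<in> polyP S \<and> v extreme_point_of (polyP S) \<and> (\<forall>x\<in>polyP S. inner c x \<le> inner c v)"

text \<open>Uniform distribution on the unit sphere: radial projection of the uniform
  distribution on the unit ball (the normalized surface measure).\<close>
definition unif_sphere :: "'a::euclidean_space measure" where
  "unif_sphere = distr (uniform_measure lborel (ball 0 1)) borel sgn"

text \<open>State of the algorithm after k iterations, given the sampled directions c
  and the LP solver vert (vert k c = vertex solution computed at iteration k).\<close>
fun alg_v :: "(nat \<Rightarrow> 'a \<Rightarrow> 'a) \<Rightarrow> (nat \<Rightarrow> 'a) \<Rightarrow> nat \<Rightarrow> 'a::euclidean_space" where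
  "alg_v vert c 0 = 0"
| "alg_v vert c (Suc k) =
     (let vb = vert k (c k) in if norm vb > norm (alg_v vert c k) then vb else alg_v vert c k)"

end

theory Submission
  imports Defs
begin

lemma ball_meas_pos1: "emeasure lborel (ball (0::'a::euclidean_space) 1) \<noteq> 0"
proof -
  have "unit_ball_vol (real DIM('a)) > 0" by simp
  then have "unit_ball_vol (real DIM('a)) \<noteq> 0" by linarith
  then show ?thesis by (simp add: emeasure_ball)
qed

lemmas ball_meas_pos = ball_meas_pos1 emeasure_lborel_ball_finite[of 0 1]

lemma prob_unif: "prob_space (unif_sphere :: 'a::euclidean_space measure)"
  unfolding unif_sphere_def
  using ball_meas_pos(1) ball_meas_pos(2)[THEN less_imp_neq] by (intro prob_space.prob_space_distr prob_space_uniform_measure) auto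

lemma unif_AE_norm: "AE x in (unif_sphere :: 'a::euclidean_space measure). norm x = 1"
proof -
  have "AE x in uniform_measure lborel (ball (0::'a) 1). norm (sgn x) = 1"
    by (intro AE_uniform_measureI) (auto intro: eventually_mono[OF AE_lborel_singleton[of 0]] simp: norm_sgn)
  then show ?thesis unfolding unif_sphere_def
    by (subst AE_distr_iff) auto
qed

lemma unif_ball_pos:
  fixes u :: "'a::euclidean_space"
  assumes "norm u = 1" "e > 0"
  shows "emeasure unif_sphere (ball u e) > 0"
proof -
  let ?U = "ball 0 1 \<inter> (-{0}) \<inter> sgn -` ball u e"
  have op: "open ?U"
  proof -
    have "continuous_on (-{0::'a}) sgn" by (intro continuous_on_sgn continuous_on_id) auto
    then have "open (sgn -` ball u e \<inter> (-{0}))" 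
      using continuous_on_open_vimage[of "-{0::'a}" sgn] by (simp add: open_Compl)
    then have "open ((-{0}) \<inter> sgn -` ball u e)" by (simp add: Int_commute)
    then show ?thesis by (simp add: Int_assoc open_Int)
  qed
  have "u /\<^sub>R 2 \<in> ?U" using assms by (auto simp: sgn_div_norm)
  then obtain r where r: "r > 0" "ball (u /\<^sub>R 2) r \<subseteq> ?U" using op open_contains_ball by blast
  have meas: "sgn -` ball u e \<inter> space borel \<in> sets (borel::'a measure)"
    by (rule measurable_sets[OF borel_measurable_sgn borel_open]) simp
  have "0 < emeasure lborel (ball (u /\<^sub>R 2) r)" using r by (simp add: emeasure_ball)
  also have "\<dots> \<le> emeasure lborel (ball 0 1 \<inter> sgn -` ball u e)"
    using r meas by (intro emeasure_mono) auto
  finally have pos: "0 < emeasure lborel (ball 0 1 \<inter> sgn -` ball u e)" .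
  have "emeasure unif_sphere (ball u e) = emeasure lborel (ball 0 1 \<inter> sgn -` ball u e) / emeasure lborel (ball (0::'a) 1)"
  proof -
    from meas show ?thesis unfolding unif_sphere_def
      by (subst emeasure_distr) (auto simp: Int_commute)
  qed
  also have "\<dots> > 0" using pos ball_meas_pos
    by (simp add: ennreal_zero_less_divide)
  finally show ?thesis .
qed

lemma infinitely_hit:
  assumes Q: "prob_space Q" and B: "B \<in> sets Q" and pos: "emeasure Q B > 0"
  shows "AE \<omega> in PiM UNIV (\<lambda>_::nat. Q). \<exists>k. \<omega> k \<in> B"
proof -
  interpret product_prob_space "\<lambda>_::nat. Q" UNIV by (rule product_prob_spaceI) (rule Q)
  have QE: "\<And>A. emeasure Q A = ennreal (measure Q A)"
    using Q by (simp add: finite_measure.emeasure_eq_measure prob_space.finite_measure)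
  have Qc: "\<And>A. A \<in> sets Q \<Longrightarrow> measure Q (space Q - A) = 1 - measure Q A"
    using Q by (simp add: prob_space.prob_compl)
  define p where "p = measure Q B"
  have p: "0 < p" "p \<le> 1" using pos B unfolding p_def by (auto simp: QE)
  let ?P = "PiM UNIV (\<lambda>_::nat. Q)"
  define N where "N = {\<omega>\<in>space ?P. \<forall>k. \<omega> k \<notin> B}"
  have Nsets: "N \<in> sets ?P"
  proof -
    have "N = (\<Inter>k. {\<omega>\<in>space ?P. \<omega> k \<in> space Q - B})"
      by (auto simp: N_def space_PiM PiE_iff)
    also have "\<dots> \<in> sets ?P" using B by measurable
    finally show ?thesis .
  qed
  have bound: "measure ?P N \<le> (1 - p) ^ n" for n
  proof -
    let ?C = "{\<omega>\<in>space ?P. \<forall>i\<in>{..<n}. \<omega> i \<in> space Q - B}"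
    have sub: "N \<subseteq> ?C" by (auto simp: N_def space_PiM PiE_iff)
    have "emeasure ?P ?C = (\<Prod>i\<in>{..<n}. emeasure Q (space Q - B))"
      using B by (intro emeasure_PiM_Collect) auto
    also have "\<dots> = ennreal ((1 - p) ^ n)"
      using B p by (simp add: QE Qc p_def prod_ennreal ennreal_power)
    finally have C: "measure ?P ?C = (1 - p) ^ n"
      using p by (simp add: measure_def)
    have "?C \<in> sets ?P" using B by measurable
    then have "measure ?P N \<le> measure ?P ?C" using sub by (intro P.finite_measure_mono) auto
    then show ?thesis using C by simp
  qed
  have "(\<lambda>n. (1 - p) ^ n) \<longlonglongrightarrow> 0" using p by (intro LIMSEQ_power_zero) auto
  then have "measure ?P N \<le> 0" using bound by (intro LIMSEQ_le_const) auto
  then have "N \<in> null_sets ?P" using Nsets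
    by (metis P.emeasure_eq_measure antisym ennreal_0 measure_nonneg null_setsI)
  then show ?thesis by (rule AE_I') (auto simp: N_def)
qed

lemma ps_choice:
  assumes "positive_spanning S"
  obtains L where "\<And>x d. d \<in> S \<Longrightarrow> L x d \<ge> 0" "\<And>x. x = (\<Sum>d\<in>S. L x d *\<^sub>R d)"
  using assms unfolding positive_spanning_def by metis

lemma P_inner_bound:
  assumes "\<And>d. d \<in> S \<Longrightarrow> l d \<ge> 0" "y = (\<Sum>d\<in>S. l d *\<^sub>R d)" "x \<in> polyP S"
  shows "inner x y \<le> (\<Sum>d\<in>S. l d)"
proof -
  have "inner x y = (\<Sum>d\<in>S. l d * inner x d)" using assms(2) by (simp add: inner_sum_right)
  also have "\<dots> \<le> (\<Sum>d\<in>S. l d * 1)"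
    using assms(1,3) by (intro sum_mono mult_left_mono) (auto simp: polyP_def)
  finally show ?thesis by simp
qed

lemma bounded_P:
  assumes "positive_spanning S"
  shows "bounded (polyP S)"
proof -
  obtain L where L: "\<And>x d. d \<in> S \<Longrightarrow> L x d \<ge> 0" "\<And>x. x = (\<Sum>d\<in>S. L x d *\<^sub>R d)"
    using ps_choice[OF assms] by blast
  define c where "c b = (\<Sum>d\<in>S. L b d) + (\<Sum>d\<in>S. L (-b) d)" for b
  have "norm x \<le> (\<Sum>b\<in>Basis. c b)" if x: "x \<in> polyP S" for x
  proof -
    have "\<bar>inner x b\<bar> \<le> c b" for b
    proof -
      have 1: "inner x b \<le> (\<Sum>d\<in>S. L b d)" using P_inner_bound[OF L(1) L(2) x] .
      have 2: "inner x (-b) \<le> (\<Sum>d\<in>S. L (-b) d)" using P_inner_bound[OF L(1) L(2) x] .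
      have 3: "(\<Sum>d\<in>S. L b d) \<ge> 0" "(\<Sum>d\<in>S. L (-b) d) \<ge> 0" using L(1) by (auto intro: sum_nonneg)
      show ?thesis using 1 2 3 unfolding c_def by (auto simp: abs_if)
    qed
    then have "(\<Sum>b\<in>Basis. \<bar>inner x b\<bar>) \<le> (\<Sum>b\<in>Basis. c b)" by (intro sum_mono)
    then show ?thesis using norm_le_l1[of x] by linarith
  qed
  then show ?thesis unfolding bounded_iff by blast
qed

lemma pos_dot:
  assumes "positive_spanning S" "norm w = 1"
  shows "\<exists>d\<in>S. inner d w > 0"
proof (rule ccontr)
  assume "\<not> ?thesis"
  then have neg: "\<And>d. d \<in> S \<Longrightarrow> inner d w \<le> 0" by force
  obtain L where L: "\<And>x d. d \<in> S \<Longrightarrow> L x d \<ge> 0" "\<And>x. x = (\<Sum>d\<in>S. L x d *\<^sub>R d)"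
    using ps_choice[OF assms(1)] by blast
  have "1 = inner w w" using assms(2) by (simp add: dot_square_norm)
  also have "\<dots> = (\<Sum>d\<in>S. L w d * inner d w)" by (subst (1) L(2)) (simp add: inner_sum_left)
  also have "\<dots> \<le> 0" using L(1) neg by (intro sum_nonpos) (simp add: mult_nonneg_nonpos)
  finally show False by simp
qed

lemma polyhedron_P:
  assumes "finite S" "\<forall>d\<in>S. norm d = 1"
  shows "polyhedron (polyP S)"
  unfolding polyhedron_def
proof (intro exI conjI)
  show "finite ((\<lambda>d. {x. inner d x \<le> 1}) ` S)" using assms by simp
  show "polyP S = \<Inter> ((\<lambda>d. {x. inner d x \<le> 1}) ` S)" by (auto simp: polyP_def inner_commute)
  show "\<forall>h\<in>(\<lambda>d. {x. inner d x \<le> 1}) ` S. \<exists>a b. a \<noteq> 0 \<and> h = {x. inner a x \<le> b}"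
  proof
    fix h assume "h \<in> (\<lambda>d. {x. inner d x \<le> 1}) ` S"
    then obtain d where "d \<in> S" "h = {x. inner d x \<le> 1}" by blast
    moreover have "d \<noteq> 0" using assms(2) \<open>d \<in> S\<close> by auto
    ultimately show "\<exists>a b. a \<noteq> 0 \<and> h = {x. inner a x \<le> b}" by blast
  qed
qed

lemma final_props:
  assumes fin: "finite S" and ps: "positive_spanning S" and un: "\<forall>d\<in>S. norm d = 1"
    and vP: "v \<in> polyP S" and vmax: "\<forall>x\<in>polyP S. norm x \<le> norm v" and v0: "v \<noteq> 0"
  shows "cosine_vector S (v /\<^sub>R norm v) \<and> 1 / norm v = cos_measure S"
proof -
  have cmv: "cm_val S u = Max ((\<lambda>d. inner d u) ` S)" for u
    unfolding cm_val_def using un by (intro arg_cong[where f=Max] image_cong) auto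
  obtain d0 where "d0 \<in> S" using pos_dot[OF ps, of "sgn v"] v0 by (auto simp: norm_sgn)
  then have Sne: "S \<noteq> {}" by auto
  have nv: "norm v > 0" using v0 by simp
  have lower: "1 / norm v \<le> cm_val S w" if w: "norm w = 1" for w
  proof -
    define m where "m = cm_val S w"
    obtain d where d: "d \<in> S" "inner d w > 0" using pos_dot[OF ps w] by blast
    have ge: "inner d' w \<le> m" if "d' \<in> S" for d'
      unfolding m_def cmv using fin that by (intro Max_ge) auto
    have mpos: "m > 0" using ge[OF d(1)] d(2) by linarith
    have "w /\<^sub>R m \<in> polyP S"
      unfolding polyP_def using ge mpos by (auto simp: inner_commute field_simps)
    then have "norm (w /\<^sub>R m) \<le> norm v" using vmax by blast
    then have "1 / m \<le> norm v" using w mpos by (simp add: inverse_eq_divide)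
    then show ?thesis unfolding m_def[symmetric] using mpos nv
      by (simp add: divide_le_eq mult.commute)
  qed
  have upper: "cm_val S (v /\<^sub>R norm v) \<le> 1 / norm v"
    unfolding cmv
  proof (subst Max_le_iff)
    show "\<forall>a\<in>(\<lambda>d. inner d (v /\<^sub>R norm v)) ` S. a \<le> 1 / norm v"
      using vP nv by (auto simp: polyP_def inner_commute inverse_eq_divide divide_right_mono)
  qed (use fin Sne in auto)
  have eq: "cm_val S (v /\<^sub>R norm v) = 1 / norm v"
    using upper lower[of "v /\<^sub>R norm v"] nv by simp
  have cv: "cosine_vector S (v /\<^sub>R norm v)"
    unfolding cosine_vector_def using eq lower nv by auto
  have "cos_measure S = 1 / norm v"
    unfolding cos_measure_def
  proof (rule cInf_eq_minimum)
    show "1 / norm v \<in> {cm_val S u |u. norm u = 1}" using eq nv by (intro CollectI exI[of _ "v /\<^sub>R norm v"]) auto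
  qed (use lower in auto)
  then show ?thesis using cv by simp
qed

lemma alg_inP:
  assumes "\<forall>k. norm (c k) = 1" "\<forall>k c. norm c = 1 \<longrightarrow> is_vertex_solution S c (vert k c)"
  shows "alg_v vert c k \<in> polyP S"
proof (induction k)
  case 0 then show ?case by (simp add: polyP_def)
next
  case (Suc k)
  have "vert k (c k) \<in> polyP S" using assms by (simp add: is_vertex_solution_def)
  with Suc show ?case by (simp add: Let_def)
qed

lemma alg_mono: "norm (alg_v vert c k) \<le> norm (alg_v vert c (Suc k))"
  by (simp add: Let_def)

lemma alg_ge: "norm (vert k (c k)) \<le> norm (alg_v vert c (Suc k))"
  by (simp add: Let_def)

lemma alg_incseq: "k \<le> j \<Longrightarrow> norm (alg_v vert c k) \<le> norm (alg_v vert c j)"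
  using incseq_SucI[of "\<lambda>k. norm (alg_v vert c k)", OF alg_mono] by (simp add: incseq_def)

theorem theorem9:
  fixes S :: "'a::euclidean_space set" and vert :: "nat \<Rightarrow> 'a \<Rightarrow> 'a"
  assumes "finite S" and "positive_spanning S" and "\<forall>d\<in>S. norm d = 1"
    and "\<forall>k c. norm c = 1 \<longrightarrow> is_vertex_solution S c (vert k c)"
  shows "AE \<omega> in PiM UNIV (\<lambda>_::nat. unif_sphere).
           \<exists>K. \<forall>k\<ge>K. (let v = alg_v vert \<omega> k in
              v \<in> polyP S \<and> (\<forall>x\<in>polyP S. (norm x)\<^sup>2 \<le> (norm v)\<^sup>2)
              \<and> cosine_vector S (v /\<^sub>R norm v)
              \<and> 1 / norm v = cos_measure S)"
proof -
  note fin = assms(1) and ps = assms(2) and un = assms(3) and vs = assms(4)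
  let ?P = "polyP S"
  have cP: "compact ?P"
    using bounded_P[OF ps] polyhedron_imp_closed[OF polyhedron_P[OF fin un]]
    by (simp add: compact_eq_bounded_closed)
  have "0 \<in> ?P" by (simp add: polyP_def)
  then have "?P \<noteq> {}" by blast
  then obtain xs where xs: "xs \<in> ?P" "\<forall>y\<in>?P. norm y \<le> norm xs"
    using continuous_attains_sup[OF cP, of norm] continuous_on_norm_id by blast
  define M where "M = norm xs"
  obtain b :: 'a where "b \<in> Basis" using nonempty_Basis by blast
  then obtain d0 where d0: "d0 \<in> S" using pos_dot[OF ps, of b] by auto
  have "d0 \<in> ?P" unfolding polyP_def
  proof (intro CollectI ballI)
    fix d assume "d \<in> S"
    have "inner d0 d \<le> norm d0 * norm d" by (rule norm_cauchy_schwarz)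
    then show "inner d0 d \<le> 1" using un d0 \<open>d \<in> S\<close> by simp
  qed
  then have M1: "M \<ge> 1" using xs d0 un unfolding M_def by force
  define E where "E = {v. v extreme_point_of ?P}"
  have finE: "finite E" unfolding E_def by (rule finite_polyhedron_extreme_points[OF polyhedron_P[OF fin un]])
  obtain eta where eta: "eta > 0" "\<And>e. e \<in> E \<Longrightarrow> norm e < M \<Longrightarrow> norm e \<le> M - eta"
  proof (cases "{e\<in>E. norm e < M} = {}")
    case True
    then show ?thesis using that[of 1] by auto
  next
    case False
    define Ns where "Ns = norm ` {e\<in>E. norm e < M}"
    have "finite Ns" "Ns \<noteq> {}" using finE False unfolding Ns_def by auto
    then have "Max Ns \<in> Ns" by (rule Max_in)
    then have "Max Ns < M" unfolding Ns_def by auto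
    moreover have "norm e \<le> Max Ns" if "e \<in> E" "norm e < M" for e
      using \<open>finite Ns\<close> that unfolding Ns_def by (intro Max_ge) auto
    ultimately show ?thesis using that[of "M - Max Ns"] by force
  qed
  define u where "u = xs /\<^sub>R M"
  have "xs \<noteq> 0" using M1 unfolding M_def by auto
  then have nu: "norm u = 1" unfolding u_def M_def by simp
  define eps where "eps = eta / (4 * M)"
  have eps: "eps > 0" using eta M1 unfolding eps_def by simp
  have key: "norm (vert k c) = M" if c: "norm c = 1" "c \<in> ball u eps" for k c
  proof -
    define y where "y = vert k c"
    have yv: "is_vertex_solution S c y" using vs c unfolding y_def by blast
    then have yP: "y \<in> ?P" and yE: "y \<in> E" and yopt: "\<forall>x\<in>?P. inner c x \<le> inner c y"
      unfolding is_vertex_solution_def E_def by auto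
    have ny: "norm y \<le> M" using xs yP unfolding M_def by blast
    have dcu: "norm (c - u) < eps" using c by (simp add: dist_norm norm_minus_commute)
    have "inner u xs = inner xs xs / norm xs" unfolding u_def M_def by (simp add: divide_inverse mult.commute)
    also have "\<dots> = M" unfolding M_def using \<open>xs \<noteq> 0\<close> by (simp add: dot_square_norm power2_eq_square)
    finally have "inner u xs = M" .
    moreover have "\<bar>inner (c - u) xs\<bar> \<le> norm (c - u) * M"
      unfolding M_def by (rule Cauchy_Schwarz_ineq2)
    moreover have "\<bar>inner (c - u) y\<bar> \<le> norm (c - u) * M"
      using Cauchy_Schwarz_ineq2[of "c - u" y] ny
      by (meson mult_left_mono norm_ge_zero order_trans)
    moreover have "inner c xs \<le> inner c y" using yopt xs by blast
    moreover have "inner u y \<le> norm y" using Cauchy_Schwarz_ineq2[of u y] nu by simp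
    moreover have "norm (c - u) * M \<le> eps * M" using dcu M1 by simp
    moreover have "inner c xs = inner u xs + inner (c - u) xs" by (simp add: inner_diff_left)
    moreover have "inner c y = inner u y + inner (c - u) y" by (simp add: inner_diff_left)
    moreover have "eps * M = eta / 4" using M1 unfolding eps_def by simp
    ultimately have "norm y \<ge> M - eta / 2" by linarith
    then have "\<not> norm y < M" using eta(2)[OF yE] eta(1) by force
    then show ?thesis using ny unfolding y_def by simp
  qed
  let ?Pi = "PiM UNIV (\<lambda>_::nat. (unif_sphere :: 'a measure))"
  interpret product_prob_space "\<lambda>_::nat. (unif_sphere :: 'a measure)" UNIV
    by (rule product_prob_spaceI) (rule prob_unif)
  have AE1: "AE \<omega> in ?Pi. \<forall>k. norm (\<omega> k) = 1"
    by (subst AE_all_countable) (auto intro: AE_component unif_AE_norm)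
  have Bs: "ball u eps \<in> sets (unif_sphere :: 'a measure)" by (simp add: unif_sphere_def)
  have AE2: "AE \<omega> in ?Pi. \<exists>k. \<omega> k \<in> ball u eps"
    by (rule infinitely_hit[OF prob_unif Bs unif_ball_pos[OF nu eps]])
  show ?thesis
    using AE1 AE2
  proof eventually_elim
    case (elim \<omega>)
    then obtain k0 where k0: "\<omega> k0 \<in> ball u eps" by blast
    have n1: "\<forall>k. norm (\<omega> k) = 1" using elim by blast
    show ?case
    proof (intro exI allI impI)
      fix k assume "Suc k0 \<le> k"
      define v where "v = alg_v vert \<omega> k"
      have vP: "v \<in> ?P" unfolding v_def by (rule alg_inP[OF n1 vs])
      have "M \<le> norm v"
        using key[OF _ k0] n1 alg_ge[of vert k0 \<omega>] alg_incseq[OF \<open>Suc k0 \<le> k\<close>, of vert \<omega>]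
        unfolding v_def by force
      then have nv: "norm v = M" using xs vP unfolding M_def by force
      have vmax: "\<forall>x\<in>?P. norm x \<le> norm v" using xs nv unfolding M_def by simp
      have v0: "v \<noteq> 0" using nv M1 by auto
      have sq: "\<forall>x\<in>?P. (norm x)\<^sup>2 \<le> (norm v)\<^sup>2" using vmax by (auto intro: power_mono)
      show "let v = alg_v vert \<omega> k in v \<in> ?P \<and> (\<forall>x\<in>?P. (norm x)\<^sup>2 \<le> (norm v)\<^sup>2)
              \<and> cosine_vector S (v /\<^sub>R norm v) \<and> 1 / norm v = cos_measure S"
        unfolding Let_def v_def[symmetric]
        using vP sq final_props[OF fin ps un vP vmax v0] by blast
    qed
  qed
qed

end
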